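(* There exist nested $(v,4,1)$-BIBDs for all $v\equiv 4\pmod{12}$ with $16\le v\le 196$.
   Context: A $(v,k,\lambda)$-BIBD is a set $X$ of $v$ points with a multiset $\mathcal{A}$ of $k$-subsets (blocks) such that every pair of distinct points lies in exactly $\lambda$ blocks; a partial $(v,k,\lambda)$-BIBD has "at most $\lambda$". A $(v,4,1)$-BIBD is nested if there is a map $\phi:\mathcal{A}\to X$ such that $\{A\cup\{\phi(A)\}:A\in\mathcal{A}\}$ is the block multiset of a partial $(v,5,2)$-BIBD on $X$ (in particular $\phi(A)\notin A$). *)

theory Defs
  imports Main "HOL-Library.Multiset"
begin

definition partial_bibd :: "'a set \<Rightarrow> 'a set multiset \<Rightarrow> nat \<Rightarrow> nat \<Rightarrow> nat \<Rightarrow> bool" where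
  "partial_bibd X B v k lam \<longleftrightarrow>
     finite X \<and> card X = v \<and>
     (\<forall>A\<in>#B. A \<subseteq> X \<and> card A = k) \<and>
     (\<forall>x\<in>X. \<forall>y\<in>X. x \<noteq> y \<longrightarrow> size (filter_mset (\<lambda>A. x \<in> A \<and> y \<in> A) B) \<le> lam)"

definition bibd :: "'a set \<Rightarrow> 'a set multiset \<Rightarrow> nat \<Rightarrow> nat \<Rightarrow> nat \<Rightarrow> bool" where
  "bibd X B v k lam \<longleftrightarrow>
     finite X \<and> card X = v \<and>
     (\<forall>A\<in>#B. A \<subseteq> X \<and> card A = k) \<and>
     (\<forall>x\<in>X. \<forall>y\<in>X. x \<noteq> y \<longrightarrow> size (filter_mset (\<lambda>A. x \<in> A \<and> y \<in> A) B) = lam)"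

definition nested_bibd :: "'a set \<Rightarrow> 'a set multiset \<Rightarrow> nat \<Rightarrow> bool" where
  "nested_bibd X B v \<longleftrightarrow>
     bibd X B v 4 1 \<and>
     (\<exists>\<phi>. (\<forall>A\<in>#B. \<phi> A \<in> X \<and> \<phi> A \<notin> A) \<and>
          partial_bibd X (image_mset (\<lambda>A. insert (\<phi> A) A) B) v 5 2)"

end

theory Submission
  imports Defs
begin

lemma two_elems: "card (A::'a set) = 4 \<Longrightarrow> \<exists>x y. x \<in> A \<and> y \<in> A \<and> x \<noteq> y"
  by (auto simp: card_Suc_eq numeral_eq_Suc)

lemma size_filter_image_mset_set:
  assumes "finite I"
  shows "size (filter_mset P (image_mset blk (mset_set I))) = card {k\<in>I. P (blk k)}"
proof -
  have "filter_mset P (image_mset blk (mset_set I)) = image_mset blk (filter_mset (P \<circ> blk) (mset_set I))"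
    by (simp add: filter_mset_image_mset o_def)
  also have "filter_mset (P \<circ> blk) (mset_set I) = mset_set {k\<in>I. P (blk k)}"
    using assms by (simp add: filter_mset_mset_set o_def)
  finally show ?thesis using assms by simp
qed

lemma nested_from_index:
  fixes I :: "'i set" and blk :: "'i \<Rightarrow> nat set" and ext :: "'i \<Rightarrow> nat" and X :: "nat set"
  assumes fI: "finite I" and fX: "finite X"
  and bl: "\<forall>k\<in>I. blk k \<subseteq> X \<and> card (blk k) = 4 \<and> ext k \<in> X \<and> ext k \<notin> blk k"
  and c1: "\<forall>x\<in>X. \<forall>y\<in>X. x\<noteq>y \<longrightarrow> card {k\<in>I. x \<in> blk k \<and> y \<in> blk k} = 1"
  and c2: "\<forall>x\<in>X. \<forall>y\<in>X. x\<noteq>y \<longrightarrow> card {k\<in>I. x \<in> insert (ext k) (blk k) \<and> y \<in> insert (ext k) (blk k)} \<le> 2"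
  shows "nested_bibd X (image_mset blk (mset_set I)) (card X)"
proof -
  have inj: "inj_on blk I"
  proof (rule inj_onI)
    fix k k' assume k: "k \<in> I" and k': "k' \<in> I" and eq: "blk k = blk k'"
    show "k = k'"
    proof (rule ccontr)
      assume ne: "k \<noteq> k'"
      have "card (blk k) = 4" using bl k by auto
      then obtain x y where xy: "x \<in> blk k" "y \<in> blk k" "x \<noteq> y"
        using two_elems by blast
      have xX: "x \<in> X" "y \<in> X" using bl k xy by auto
      have "{k, k'} \<subseteq> {k\<in>I. x \<in> blk k \<and> y \<in> blk k}" using k k' xy eq by auto
      hence "card {k, k'} \<le> card {k\<in>I. x \<in> blk k \<and> y \<in> blk k}"
        by (intro card_mono) (use fI in auto)
      with c1 xX xy ne show False by auto
    qed
  qed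
  define phi where "phi = ext \<circ> inv_into I blk"
  have phik: "phi (blk k) = ext k" if "k \<in> I" for k
    using inj that by (simp add: phi_def)
  have img: "image_mset (\<lambda>A. insert (phi A) A) (image_mset blk (mset_set I))
      = image_mset (\<lambda>k. insert (ext k) (blk k)) (mset_set I)"
  proof -
    have "image_mset (\<lambda>A. insert (phi A) A) (image_mset blk (mset_set I))
      = image_mset (\<lambda>k. insert (phi (blk k)) (blk k)) (mset_set I)"
      by (simp add: multiset.map_comp o_def)
    also have "\<dots> = image_mset (\<lambda>k. insert (ext k) (blk k)) (mset_set I)"
      by (rule image_mset_cong) (use fI phik in auto)
    finally show ?thesis .
  qed
  have mem: "A \<in># image_mset blk (mset_set I) \<longleftrightarrow> (\<exists>k\<in>I. A = blk k)" for A
    using fI by auto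
  have b: "bibd X (image_mset blk (mset_set I)) (card X) 4 1"
    unfolding bibd_def
    using fX bl c1 fI by (auto simp: size_filter_image_mset_set[OF fI])
  have p: "partial_bibd X (image_mset (\<lambda>A. insert (phi A) A) (image_mset blk (mset_set I))) (card X) 5 2"
    unfolding partial_bibd_def img
  proof (intro conjI ballI impI)
    show "finite X" by fact
    show "card X = card X" ..
  next
    fix A assume "A \<in># image_mset (\<lambda>k. insert (ext k) (blk k)) (mset_set I)"
    then obtain k where k: "k \<in> I" and A: "A = insert (ext k) (blk k)" using fI by auto
    have fb: "finite (blk k)" using bl k fX finite_subset by blast
    show "A \<subseteq> X" using bl k fb by (auto simp: A)
    show "card A = 5" using bl k fb by (auto simp: A)
  next
    fix x y assume "x \<in> X" "y \<in> X" "x \<noteq> y"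
    thus "size (filter_mset (\<lambda>A. x \<in> A \<and> y \<in> A) (image_mset (\<lambda>k. insert (ext k) (blk k)) (mset_set I))) \<le> 2"
      using c2 by (simp add: size_filter_image_mset_set[OF fI])
  qed
  have e: "\<forall>A\<in>#image_mset blk (mset_set I). phi A \<in> X \<and> phi A \<notin> A"
    using bl phik fI by auto
  show ?thesis unfolding nested_bibd_def using b p e by blast
qed

definition dif :: "nat \<Rightarrow> nat \<Rightarrow> nat \<Rightarrow> nat" where
  "dif n a b = (b + n - a) mod n"

fun merge :: "nat list \<Rightarrow> nat list \<Rightarrow> nat list" where
"merge [] ys = ys" | "merge xs [] = xs" |
"merge (x#xs) (y#ys) = (if x \<le> y then x # merge xs (y#ys) else y # merge (x#xs) ys)"

fun halves :: "nat list \<Rightarrow> nat list \<times> nat list" where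
"halves [] = ([],[])" | "halves [x] = ([x],[])" |
"halves (x#y#r) = (case halves r of (a,b) \<Rightarrow> (x#a, y#b))"

lemma halves_len: "length (fst (halves xs)) + length (snd (halves xs)) = length xs \<and> length (snd (halves xs)) \<le> length (fst (halves xs)) \<and> length (fst (halves xs)) \<le> Suc (length (snd (halves xs)))"
  by (induction xs rule: halves.induct) (auto split: prod.split)

function msort :: "nat list \<Rightarrow> nat list" where
"msort [] = []" | "msort [x] = [x]" |
"msort (x#y#r) = (case halves (x#y#r) of (a,b) \<Rightarrow> merge (msort a) (msort b))"
  by pat_completeness auto
lemma halves_lt: "halves (x#y#r) = (a,b) \<Longrightarrow> length a < Suc (Suc (length r)) \<and> length b < Suc (Suc (length r))"
  using halves_len[of "x#y#r"] by auto

lemma halves_le: "halves r = (a,b) \<Longrightarrow> length a \<le> length r \<and> length b \<le> length r"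
  using halves_len[of r] by auto

termination by (relation "measure length") (auto split: prod.splits dest!: halves_le)

fun no3 :: "nat list \<Rightarrow> bool" where
"no3 (a#b#c#r) = (a \<noteq> c \<and> no3 (b#c#r))" | "no3 _ = True"

definition pdiffs :: "nat \<Rightarrow> nat list \<Rightarrow> nat list" where
"pdiffs n D = map (\<lambda>(a,b). dif n a b) (filter (\<lambda>(a,b). a \<noteq> b) (List.product D D))"

definition fulldiffs :: "nat \<Rightarrow> (nat list \<times> nat) list \<Rightarrow> nat list" where
"fulldiffs n Ds = concat (map (\<lambda>(D,p). pdiffs n D) Ds)"

definition extdiffs :: "nat \<Rightarrow> (nat list \<times> nat) list \<Rightarrow> nat list" where
"extdiffs n Ds = concat (map (\<lambda>(D,p). pdiffs n (p#D)) Ds)"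

fun qlist :: "nat \<Rightarrow> nat \<Rightarrow> nat \<Rightarrow> nat list \<Rightarrow> nat list" where
"qlist n m i [] = []" |
"qlist n m i (e#es) = [dif n i e, dif n e i, dif n (i+m) e, dif n e (i+m), dif n (i+2*m) e, dif n e (i+2*m)] @ qlist n m (Suc i) es"

fun eok :: "nat \<Rightarrow> nat \<Rightarrow> nat \<Rightarrow> nat list \<Rightarrow> bool" where
"eok n m i [] = True" |
"eok n m i (e#es) = (e < n \<and> e mod m \<noteq> i \<and> eok n m (Suc i) es)"

fun nomut :: "nat \<Rightarrow> nat list \<Rightarrow> nat \<Rightarrow> nat list \<Rightarrow> bool" where
"nomut m all i [] = True" |
"nomut m all i (e#es) = (all ! (e mod m) mod m \<noteq> i \<and> nomut m all (Suc i) es)"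

function tgt :: "nat \<Rightarrow> nat \<Rightarrow> nat \<Rightarrow> nat list" where
"tgt m n k = (if n \<le> k then [] else if k mod m = 0 then tgt m n (Suc k) else k # tgt m n (Suc k))"
  by auto
termination by (relation "measure (\<lambda>(m,n,k). n - k)") auto

declare tgt.simps[simp del]

definition blockok :: "nat \<Rightarrow> nat list \<times> nat \<Rightarrow> bool" where
"blockok n Dp = (case Dp of (D,p) \<Rightarrow> length D = 4 \<and> distinct D \<and> list_all (\<lambda>x. x < n) D \<and> p < n \<and> p \<notin> set D)"

fun incr :: "nat list \<Rightarrow> bool" where
"incr (x#y#r) = (x \<le> y \<and> incr (y#r))" | "incr _ = True"

fun sincr :: "nat list \<Rightarrow> bool" where
"sincr (x#y#r) = (x < y \<and> sincr (y#r))" | "sincr _ = True"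

definition ok3 :: "nat list \<Rightarrow> bool" where
"ok3 S = (incr S \<and> no3 S)"

definition cyc_ok :: "nat \<Rightarrow> (nat list \<times> nat) list \<Rightarrow> nat list \<Rightarrow> nat list \<Rightarrow> bool" where
"cyc_ok m Ds es R = (0 < m \<and> list_all (blockok (3*m)) Ds \<and> length es = m \<and> eok (3*m) m 0 es
   \<and> sincr (msort es) \<and> nomut m es 0 es
   \<and> msort (fulldiffs (3*m) Ds) = tgt m (3*m) 1
   \<and> sincr R \<and> list_all (\<lambda>q. q \<in> set R) (qlist (3*m) m 0 es)
   \<and> ok3 (msort (extdiffs (3*m) Ds @ R @ [m, 2*m])))"

lemma int_sub_mod: "i \<le> n \<Longrightarrow> int ((x + n - i) mod n) = (int x - int i) mod int n"
proof -
  assume "i \<le> n"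
  hence "int (x + n - i) = int x - int i + int n" by simp
  hence "int ((x + n - i) mod n) = (int x - int i + int n) mod int n" by (simp add: zmod_int)
  thus ?thesis by simp
qed

lemma int_add_mod: "int ((z + i) mod n) = (int z + int i) mod int n"
  by (simp add: zmod_int)

lemma nat_eq_mod: "a < n \<Longrightarrow> b < n \<Longrightarrow> (a = b \<longleftrightarrow> int n dvd (int a - int b))"
  by (metis mod_eq_dvd_iff mod_less of_nat_eq_iff of_nat_mod)

lemma shift_mem:
  fixes x n i :: nat and S :: "nat set"
  assumes "x < n" "i < n" "\<forall>z\<in>S. z < n"
  shows "x \<in> (\<lambda>z. (z + i) mod n) ` S \<longleftrightarrow> (x + n - i) mod n \<in> S"
proof
  assume "x \<in> (\<lambda>z. (z + i) mod n) ` S"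
  then obtain z where z: "z \<in> S" "x = (z + i) mod n" by auto
  have "z < n" using assms z by auto
  have "(x + n - i) mod n = z"
  proof -
    have "int ((x + n - i) mod n) = (int x - int i) mod int n" using assms by (simp add: int_sub_mod)
    also have "int x = (int z + int i) mod int n" using z(2) by (simp add: int_add_mod)
    also have "((int z + int i) mod int n - int i) mod int n = int z mod int n" by (simp add: mod_simps)
    also have "\<dots> = int z" using \<open>z < n\<close> by simp
    finally show ?thesis by simp
  qed
  thus "(x + n - i) mod n \<in> S" using z by simp
next
  assume h: "(x + n - i) mod n \<in> S"
  have "x = ((x + n - i) mod n + i) mod n"
  proof -
    have "int (((x + n - i) mod n + i) mod n) = ((int x - int i) mod int n + int i) mod int n"
      using assms by (simp add: int_add_mod int_sub_mod)
    also have "\<dots> = int x mod int n" by (simp add: mod_simps)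
    also have "\<dots> = int x" using assms by simp
    finally show ?thesis by simp
  qed
  thus "x \<in> (\<lambda>z. (z + i) mod n) ` S" using h by blast
qed

lemma dif_int: "a < n \<Longrightarrow> int (dif n a b) = (int b - int a) mod int n"
  unfolding dif_def by (simp add: int_sub_mod)

lemma int_inj_lt: "a < n \<Longrightarrow> b < n \<Longrightarrow> int a mod int n = int b mod int n \<Longrightarrow> a = b"
  by simp

lemma L1:
  fixes x y n :: nat and S :: "nat set"
  assumes xy: "x < n" "y < n" and S: "\<forall>z\<in>S. z < n"
  shows "card {i \<in> {..<n}. x \<in> (\<lambda>z. (z + i) mod n) ` S \<and> y \<in> (\<lambda>z. (z + i) mod n) ` S}
       = card {(a,b) \<in> S \<times> S. dif n a b = dif n x y}"
proof -
  have n0: "0 < n" using xy by simp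
  define Q where "Q = {i \<in> {..<n}. (x + n - i) mod n \<in> S \<and> (y + n - i) mod n \<in> S}"
  define P where "P = {(a,b) \<in> S \<times> S. dif n a b = dif n x y}"
  have eqQ: "{i \<in> {..<n}. x \<in> (\<lambda>z. (z + i) mod n) ` S \<and> y \<in> (\<lambda>z. (z + i) mod n) ` S} = Q"
    unfolding Q_def using shift_mem[OF xy(1) _ S] shift_mem[OF xy(2) _ S] by auto
  define h where "h i = ((x + n - i) mod n, (y + n - i) mod n)" for i
  have inj: "inj_on h Q"
  proof (rule inj_onI)
    fix i j assume ij: "i \<in> Q" "j \<in> Q" "h i = h j"
    hence "(x + n - i) mod n = (x + n - j) mod n" and lt: "i < n" "j < n" by (auto simp: h_def Q_def)
    hence "int ((x + n - i) mod n) = int ((x + n - j) mod n)" by simp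
    hence "(int x - int i) mod int n = (int x - int j) mod int n" using lt by (simp add: int_sub_mod)
    hence "int n dvd ((int x - int i) - (int x - int j))" by (simp add: mod_eq_dvd_iff)
    hence "int n dvd (int j - int i)" by simp
    hence "int j mod int n = int i mod int n" by (simp add: mod_eq_dvd_iff)
    thus "i = j" using lt by simp
  qed
  have img: "h ` Q = P"
  proof
    show "h ` Q \<subseteq> P"
    proof
      fix ab assume "ab \<in> h ` Q"
      then obtain i where i: "i \<in> Q" "ab = h i" by auto
      have lt: "i < n" using i by (simp add: Q_def)
      let ?a = "(x + n - i) mod n" and ?b = "(y + n - i) mod n"
      have "int (dif n ?a ?b) = (int ?b - int ?a) mod int n" using n0 by (simp add: dif_int)
      also have "\<dots> = ((int y - int i) mod int n - (int x - int i) mod int n) mod int n"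
        using lt by (simp add: int_sub_mod)
      also have "\<dots> = (int y - int x) mod int n" by (simp add: mod_simps)
      also have "\<dots> = int (dif n x y)" using xy by (simp add: dif_int)
      finally have "dif n ?a ?b = dif n x y" by simp
      thus "ab \<in> P" using i by (auto simp: P_def Q_def h_def)
    qed
  next
    show "P \<subseteq> h ` Q"
    proof
      fix ab assume "ab \<in> P"
      then obtain a b where ab: "ab = (a,b)" "a \<in> S" "b \<in> S" "dif n a b = dif n x y" by (auto simp: P_def)
      have lt: "a < n" "b < n" using ab S by auto
      define i where "i = (x + n - a) mod n"
      have ilt: "i < n" using n0 by (simp add: i_def)
      have ia: "(x + n - i) mod n = a"
      proof -
        have "int ((x + n - i) mod n) = (int x - (int x - int a) mod int n) mod int n"
          using ilt lt by (simp add: int_sub_mod i_def)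
        also have "\<dots> = int a mod int n" by (simp add: mod_simps)
        finally show ?thesis using lt by simp
      qed
      have hd: "(int b - int a) mod int n = (int y - int x) mod int n"
        using ab(4) lt xy by (metis dif_int)
      have ib: "(y + n - i) mod n = b"
      proof -
        have "int ((y + n - i) mod n) = (int y - (int x - int a) mod int n) mod int n"
          using ilt lt by (simp add: int_sub_mod i_def)
        also have "\<dots> = (int y - (int x - int a)) mod int n" by (simp add: mod_simps)
        also have "\<dots> = (int y - int x + int a) mod int n" by (simp add: algebra_simps)
        also have "\<dots> = int b mod int n"
        proof -
          have "int n dvd ((int b - int a) - (int y - int x))" using hd by (simp add: mod_eq_dvd_iff)
          hence "int n dvd ((int y - int x + int a) - int b)"
            by (metis dvd_minus_iff minus_diff_eq diff_diff_eq2 add.commute diff_add_eq diff_diff_eq)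
          thus ?thesis by (simp add: mod_eq_dvd_iff)
        qed
        finally show ?thesis using lt by simp
      qed
      have "i \<in> Q" unfolding Q_def using ilt ia ib ab by auto
      moreover have "ab = h i" using ia ib ab by (simp add: h_def)
      ultimately show "ab \<in> h ` Q" by blast
    qed
  qed
  show ?thesis unfolding eqQ P_def[symmetric] using card_image[OF inj] img by simp
qed

lemma mset_merge[simp]: "mset (merge xs ys) = mset xs + mset ys"
  by (induction xs ys rule: merge.induct) auto

lemma mset_halves: "halves xs = (a,b) \<Longrightarrow> mset a + mset b = mset xs"
  by (induction xs arbitrary: a b rule: halves.induct) (auto split: prod.splits)

lemma mset_msort[simp]: "mset (msort xs) = mset xs"
proof (induction xs rule: msort.induct)
  case (3 x y r)
  obtain a b where h: "halves (x#y#r) = (a,b)" by (cases "halves (x#y#r)")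
  show ?case using 3 h mset_halves[OF h] by simp
qed auto

lemma no3_count: "sorted xs \<Longrightarrow> no3 xs \<Longrightarrow> count_list xs d \<le> 2"
proof (induction xs rule: no3.induct)
  case (1 a b c r)
  have s: "sorted (b#c#r)" using 1(2) by simp
  have n3: "no3 (b#c#r)" and ac: "a \<noteq> c" using 1(3) by auto
  have IH: "count_list (b#c#r) d \<le> 2" using 1(1) s n3 by blast
  show ?case
  proof (cases "d = a")
    case True
    have "a < c" using 1(2) ac by auto
    hence "\<forall>z\<in>set r. z \<noteq> d" using 1(2) True by auto
    hence "d \<notin> set r" by blast
    hence "count_list r d = 0" by (simp add: count_list_0_iff)
    thus ?thesis using True ac by auto
  next
    case False
    thus ?thesis using IH by simp
  qed
qed (auto)

lemma tgt_count: "count_list (tgt m n k) d = (if k \<le> d \<and> d < n \<and> d mod m \<noteq> 0 then 1 else 0)"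
proof (induction m n k rule: tgt.induct)
  case (1 m n k)
  show ?case
    apply (subst tgt.simps)
    using 1 by (auto simp: le_eq_less_or_eq)
qed

lemma eok_nth: "eok n m k es \<Longrightarrow> i < length es \<Longrightarrow> es ! i < n \<and> es ! i mod m \<noteq> k + i"
proof (induction n m k es arbitrary: i rule: eok.induct)
  case (2 n m k e es)
  thus ?case by (cases i) auto
qed auto

lemma nomut_nth: "nomut m all k es \<Longrightarrow> i < length es \<Longrightarrow> all ! (es ! i mod m) mod m \<noteq> k + i"
proof (induction m all k es arbitrary: i rule: nomut.induct)
  case (2 m all k e es)
  thus ?case by (cases i) auto
qed auto

lemma qlist_mem: "i < length es \<Longrightarrow> x \<in> {k+i, k+i+m, k+i+2*m} \<Longrightarrow>
   dif n x (es!i) \<in> set (qlist n m k es) \<and> dif n (es!i) x \<in> set (qlist n m k es)"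
proof (induction n m k es arbitrary: i rule: qlist.induct)
  case (2 n m k e es)
  show ?case
  proof (cases i)
    case 0 thus ?thesis using 2 by auto
  next
    case (Suc j)
    have "x \<in> {Suc k + j, Suc k + j + m, Suc k + j + 2*m}" using 2(3) Suc by auto
    thus ?thesis using 2 Suc by auto
  qed
qed auto

lemma count_map_distinct: "distinct xs \<Longrightarrow> count_list (map f xs) d = card {z \<in> set xs. f z = d}"
proof (induction xs)
  case (Cons x xs)
  have fin: "finite {z \<in> set xs. f z = d}" by simp
  have "{z \<in> set (x#xs). f z = d} = (if f x = d then insert x {z \<in> set xs. f z = d} else {z \<in> set xs. f z = d})"
    by auto
  thus ?case using Cons fin by (auto simp: card_insert_if)
qed simp

lemma count_concat_map: "count_list (concat (map f xs)) d = (\<Sum>j<length xs. count_list (f (xs ! j)) d)"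
proof (induction xs)
  case (Cons x xs)
  thus ?case by (simp add: sum.lessThan_Suc_shift del: sum.lessThan_Suc)
qed simp

lemma dif_zero_iff: "x < n \<Longrightarrow> y < n \<Longrightarrow> dif n x y = 0 \<longleftrightarrow> x = y"
proof -
  assume xy: "x < n" "y < n"
  have "dif n x y = 0 \<longleftrightarrow> int (dif n x y) = 0" by simp
  also have "\<dots> \<longleftrightarrow> (int y - int x) mod int n = 0" using xy by (simp add: dif_int)
  also have "\<dots> \<longleftrightarrow> int n dvd (int y - int x)" by (simp add: dvd_eq_mod_eq_0)
  also have "\<dots> \<longleftrightarrow> y = x" using nat_eq_mod[OF xy(2) xy(1)] by simp
  finally show ?thesis by auto
qed

lemma dif_lt: "0 < n \<Longrightarrow> dif n x y < n"
  by (simp add: dif_def)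

lemma dif_mod_m: "(x::nat) < 3*m \<Longrightarrow> y < 3*m \<Longrightarrow> (dif (3*m) x y mod m = 0 \<longleftrightarrow> x mod m = y mod m)"
proof -
  assume xy: "x < 3*m" "y < 3*m"
  have d: "int (dif (3*m) x y) = (int y - int x) mod int (3*m)" using xy by (intro dif_int) 
  have "int (dif (3*m) x y mod m) = int (dif (3*m) x y) mod int m" by (simp only: zmod_int)
  also have "\<dots> = (int y - int x) mod int (3*m) mod int m" using d by simp
  also have "\<dots> = (int y - int x) mod int m"
    by (rule mod_mod_cancel) simp
  finally have e: "int (dif (3*m) x y mod m) = (int y - int x) mod int m" .
  have "dif (3*m) x y mod m = 0 \<longleftrightarrow> (int y - int x) mod int m = 0" using e by linarith
  also have "\<dots> \<longleftrightarrow> int y mod int m = int x mod int m" by (simp add: mod_eq_dvd_iff dvd_eq_mod_eq_0)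
  also have "\<dots> \<longleftrightarrow> y mod m = x mod m" by (metis of_nat_eq_iff of_nat_mod)
  finally show ?thesis by auto
qed

lemma shift_inj: "(a::nat) < n \<Longrightarrow> b < n \<Longrightarrow> (a + i) mod n = (b + i) mod n \<longleftrightarrow> a = b"
proof -
  assume ab: "a < n" "b < n"
  have "(a + i) mod n = (b + i) mod n \<longleftrightarrow> int ((a + i) mod n) = int ((b + i) mod n)" by linarith
  also have "\<dots> \<longleftrightarrow> (int a + int i) mod int n = (int b + int i) mod int n" by (simp add: int_add_mod)
  also have "\<dots> \<longleftrightarrow> int n dvd (int a - int b)" by (simp add: mod_eq_dvd_iff)
  also have "\<dots> \<longleftrightarrow> a = b" using nat_eq_mod[OF ab] by simp
  finally show ?thesis .
qed

lemma trip_mod: "(x::nat) < 3*m \<Longrightarrow> i < m \<Longrightarrow> (x = i \<or> x = i + m \<or> x = i + 2*m) \<longleftrightarrow> x mod m = i"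
proof
  assume "x < 3*m" "i < m" "x = i \<or> x = i + m \<or> x = i + 2*m"
  thus "x mod m = i" by auto
next
  assume h: "x < 3*m" "i < m" "x mod m = i"
  have "x div m < 3" using h by (simp add: div_less_iff_less_mult mult.commute)
  hence "x div m = 0 \<or> x div m = 1 \<or> x div m = 2" by auto
  moreover have "x = x div m * m + x mod m" by simp
  ultimately show "x = i \<or> x = i + m \<or> x = i + 2*m" using h by auto
qed

lemma L2:
  assumes "distinct D" "\<forall>z\<in>set D. z < n" "d \<noteq> 0"
  shows "count_list (pdiffs n D) d = card {(a,b) \<in> set D \<times> set D. dif n a b = d}"
proof -
  have "count_list (pdiffs n D) d = card {z \<in> set (filter (\<lambda>(a,b). a \<noteq> b) (List.product D D)). (\<lambda>(a,b). dif n a b) z = d}"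
    unfolding pdiffs_def using assms(1) by (intro count_map_distinct) (simp add: distinct_product)
  also have "{z \<in> set (filter (\<lambda>(a,b). a \<noteq> b) (List.product D D)). (\<lambda>(a,b). dif n a b) z = d}
     = {(a,b) \<in> set D \<times> set D. dif n a b = d}"
    using assms(3) by (auto simp: dif_def)
  finally show ?thesis .
qed

lemma incr_sorted: "incr xs \<Longrightarrow> sorted xs"
  by (induction xs rule: incr.induct) auto

lemma sincr_sw: "sincr xs \<Longrightarrow> sorted_wrt (<) xs"
proof (induction xs rule: sincr.induct)
  case (1 x y r)
  hence "x < y" "sorted_wrt (<) (y#r)" by auto
  thus ?case by auto
qed auto

lemma sincr_distinct: "sincr xs \<Longrightarrow> distinct xs"
  using sincr_sw strict_sorted_iff by blast

lemma count_msort: "count_list (msort xs) d = count_list xs d"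
  by (metis count_mset mset_msort)

lemma fullcount:
  fixes n t x y :: nat and G :: "nat \<Rightarrow> nat list"
  assumes G: "\<forall>j<t. distinct (G j) \<and> (\<forall>z\<in>set (G j). z < n)" and xy: "x < n" "y < n" "x \<noteq> y"
  shows "card {(j,i) \<in> {..<t} \<times> {..<n}. x \<in> (\<lambda>z. (z+i) mod n) ` set (G j) \<and> y \<in> (\<lambda>z. (z+i) mod n) ` set (G j)}
     = (\<Sum>j<t. count_list (pdiffs n (G j)) (dif n x y))"
proof -
  let ?P = "\<lambda>j i. x \<in> (\<lambda>z. (z+i) mod n) ` set (G j) \<and> y \<in> (\<lambda>z. (z+i) mod n) ` set (G j)"
  have eq: "{(j,i) \<in> {..<t} \<times> {..<n}. ?P j i} = Sigma {..<t} (\<lambda>j. {i \<in> {..<n}. ?P j i})" by auto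
  have "card {(j,i) \<in> {..<t} \<times> {..<n}. ?P j i} = (\<Sum>j<t. card {i \<in> {..<n}. ?P j i})"
    unfolding eq by (rule card_SigmaI) auto
  also have "\<dots> = (\<Sum>j<t. count_list (pdiffs n (G j)) (dif n x y))"
  proof (rule sum.cong)
    fix j assume "j \<in> {..<t}"
    hence Gj: "distinct (G j)" "\<forall>z\<in>set (G j). z < n" using G by auto
    have d0: "dif n x y \<noteq> 0" using dif_zero_iff xy by simp
    show "card {i \<in> {..<n}. ?P j i} = count_list (pdiffs n (G j)) (dif n x y)"
      using L1[OF xy(1,2) Gj(2)] L2[OF Gj d0] by simp
  qed simp
  finally show ?thesis .
qed

lemma fullcount2:
  fixes n t x y :: nat and G :: "nat \<Rightarrow> nat list" and B :: "nat \<times> nat \<Rightarrow> nat set"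
  assumes G: "\<forall>j<t. distinct (G j) \<and> (\<forall>z\<in>set (G j). z < n)"
    and B: "\<forall>j<t. \<forall>i. B (j,i) = (\<lambda>z. (z+i) mod n) ` set (G j)"
    and xy: "x < n" "y < n" "x \<noteq> y"
  shows "card {(j,i) \<in> {..<t} \<times> {..<n}. x \<in> B (j,i) \<and> y \<in> B (j,i)}
     = (\<Sum>j<t. count_list (pdiffs n (G j)) (dif n x y))"
proof -
  let ?P = "\<lambda>j i. x \<in> B (j,i) \<and> y \<in> B (j,i)"
  have eq: "{(j,i) \<in> {..<t} \<times> {..<n}. ?P j i} = Sigma {..<t} (\<lambda>j. {i \<in> {..<n}. ?P j i})" by auto
  have "card {(j,i) \<in> {..<t} \<times> {..<n}. ?P j i} = (\<Sum>j<t. card {i \<in> {..<n}. ?P j i})"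
    unfolding eq by (rule card_SigmaI) auto
  also have "\<dots> = (\<Sum>j<t. count_list (pdiffs n (G j)) (dif n x y))"
  proof (rule sum.cong)
    fix j assume j: "j \<in> {..<t}"
    hence Gj: "distinct (G j)" "\<forall>z\<in>set (G j). z < n" using G by auto
    have Bj: "\<And>i. B (j,i) = (\<lambda>z. (z+i) mod n) ` set (G j)" using B j by auto
    have d0: "dif n x y \<noteq> 0" using dif_zero_iff xy by simp
    show "card {i \<in> {..<n}. ?P j i} = count_list (pdiffs n (G j)) (dif n x y)"
      unfolding Bj using L1[OF xy(1,2) Gj(2)] L2[OF Gj d0] by simp
  qed simp
  finally show ?thesis .
qed

lemma card_Un_split:
  assumes "finite A" "finite B" "A \<inter> B = {}"
  shows "card {k \<in> A \<union> B. P k} = card {k \<in> A. P k} + card {k \<in> B. P k}"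
proof -
  have "{k \<in> A \<union> B. P k} = {k \<in> A. P k} \<union> {k \<in> B. P k}" by auto
  thus ?thesis using assms by (simp add: card_Un_disjoint disjoint_iff)
qed

lemma card_pair_img: "card {k \<in> {t} \<times> A. P k} = card {i \<in> A. P (t,i)}"
proof -
  have "{k \<in> {t} \<times> A. P k} = Pair t ` {i \<in> A. P (t,i)}" by auto
  thus ?thesis by (simp add: card_image inj_on_def)
qed

lemma card_if_single: "card (if b then {a} else {}) = (if b then 1 else 0)"
  by simp

theorem cyc_main:
  assumes ok: "cyc_ok m Ds es R"
  shows "\<exists>X :: nat set. \<exists>B. nested_bibd X B (3*m+1)"
proof -
  define n where "n = 3*m"
  define t where "t = length Ds"
  from ok have m0: "0 < m" and bo: "list_all (blockok n) Ds" and les: "length es = m"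
    and eo: "eok n m 0 es" and se: "sincr (msort es)" and nm: "nomut m es 0 es"
    and fd: "msort (fulldiffs n Ds) = tgt m n 1" and sR: "sincr R"
    and qR: "list_all (\<lambda>q. q \<in> set R) (qlist n m 0 es)"
    and iS: "incr (msort (extdiffs n Ds @ R @ [m, 2*m]))"
    and n3: "no3 (msort (extdiffs n Ds @ R @ [m, 2*m]))"
    unfolding cyc_ok_def n_def ok3_def by auto
  have n0: "0 < n" using m0 n_def by simp
  have Dj: "length (fst (Ds!j)) = 4 \<and> distinct (fst (Ds!j)) \<and> (\<forall>z\<in>set (fst (Ds!j)). z < n)
      \<and> snd (Ds!j) < n \<and> snd (Ds!j) \<notin> set (fst (Ds!j))" if "j < t" for j
  proof -
    have "blockok n (Ds!j)" using bo that by (simp add: list_all_length t_def)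
    thus ?thesis by (cases "Ds!j") (auto simp: blockok_def list_all_iff)
  qed
  have E: "es!i < n \<and> es!i mod m \<noteq> i" if "i < m" for i
    using eok_nth[OF eo, of i] les that by simp
  have dE: "distinct es"
    using sincr_distinct[OF se] mset_eq_imp_distinct_iff[of "msort es" es] by simp
  have NM: "es!(es!i mod m) mod m \<noteq> i" if "i < m" for i
    using nomut_nth[OF nm, of i] les that by simp
  have cF: "count_list (fulldiffs n Ds) d = (if 1 \<le> d \<and> d < n \<and> d mod m \<noteq> 0 then 1 else 0)" for d
    using count_msort[of "fulldiffs n Ds" d] fd tgt_count[of m n 1 d] by simp
  have cE: "count_list (extdiffs n Ds) d + count_list R d + count_list [m, 2*m] d \<le> 2" for d
    using no3_count[OF incr_sorted[OF iS] n3, of d] by (simp add: count_msort)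
  have QR: "set (qlist n m 0 es) \<subseteq> set R" using qR by (auto simp: list_all_iff)
  have dR: "distinct R" using sincr_distinct[OF sR] .
  have cR: "count_list R d \<ge> 1" if "d \<in> set (qlist n m 0 es)" for d
    using QR that by (metis One_nat_def Suc_leI count_list_0_iff gr0I subsetD)

  have fdsum: "count_list (fulldiffs n Ds) d = (\<Sum>j<t. count_list (pdiffs n (fst (Ds!j))) d)" for d
    unfolding fulldiffs_def t_def by (simp add: count_concat_map case_prod_beta)
  have edsum: "count_list (extdiffs n Ds) d = (\<Sum>j<t. count_list (pdiffs n (snd (Ds!j) # fst (Ds!j))) d)" for d
    unfolding extdiffs_def t_def by (simp add: count_concat_map case_prod_beta)

  define IF where "IF = {..<t} \<times> {..<n}"
  define IS where "IS = {t} \<times> {..<m}"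
  define blk where "blk = (\<lambda>(j,i). if j < t then (\<lambda>z. (z+i) mod n) ` set (fst (Ds!j)) else {n, i, i+m, i+2*m})"
  define ext where "ext = (\<lambda>(j,i). if j < t then (snd (Ds!j) + i) mod n else es!i)"
  define X where "X = {..n}"
  have finI: "finite (IF \<union> IS)" unfolding IF_def IS_def by simp
  have disj: "IF \<inter> IS = {}" unfolding IF_def IS_def by auto
  have fX: "finite X" unfolding X_def by simp
  have cX: "card X = 3*m+1" unfolding X_def n_def by simp

  have blkF: "blk (j,i) = (\<lambda>z. (z+i) mod n) ` set (fst (Ds!j))" "ext (j,i) = (snd (Ds!j) + i) mod n"
    if "j < t" for j i using that by (auto simp: blk_def ext_def)
  have blkS: "blk (t,i) = {n, i, i+m, i+2*m}" "ext (t,i) = es!i" for i by (auto simp: blk_def ext_def)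
  have blkE: "insert (ext (j,i)) (blk (j,i)) = (\<lambda>z. (z+i) mod n) ` set (snd (Ds!j) # fst (Ds!j))"
    if "j < t" for j i using that blkF by simp

  have bl: "\<forall>k\<in>IF \<union> IS. blk k \<subseteq> X \<and> card (blk k) = 4 \<and> ext k \<in> X \<and> ext k \<notin> blk k"
  proof
    fix k assume k: "k \<in> IF \<union> IS"
    show "blk k \<subseteq> X \<and> card (blk k) = 4 \<and> ext k \<in> X \<and> ext k \<notin> blk k"
    proof (cases "k \<in> IF")
      case True
      then obtain j i where k: "k = (j,i)" "j < t" "i < n" by (auto simp: IF_def)
      note D = Dj[OF k(2)]
      have inj: "inj_on (\<lambda>z. (z+i) mod n) (set (fst (Ds!j)))"
        using D shift_inj by (auto simp: inj_on_def)
      have c: "card ((\<lambda>z. (z+i) mod n) ` set (fst (Ds!j))) = 4"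
        using card_image[OF inj] D distinct_card by metis
      have ni: "(snd (Ds!j) + i) mod n \<notin> (\<lambda>z. (z+i) mod n) ` set (fst (Ds!j))"
        using D shift_inj by auto
      show ?thesis using k blkF c ni n0 by (auto simp: X_def)
    next
      case False
      then obtain i where k: "k = (t,i)" "i < m" using k by (auto simp: IS_def)
      have c: "card {n, i, i+m, i+2*m} = 4" using k m0 n_def by auto
      have ni: "es!i \<notin> {n, i, i+m, i+2*m}"
        using E[OF k(2)] trip_mod[of "es!i" m i] k(2) n_def by auto
      show ?thesis using k blkS c ni E[OF k(2)] n_def by (auto simp: X_def)
    qed
  qed

  have splitc: "card {k \<in> IF \<union> IS. P k} = card {(j,i) \<in> {..<t} \<times> {..<n}. P (j,i)} + card {i \<in> {..<m}. P (t,i)}" for P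
  proof -
    have e: "{k \<in> {..<t} \<times> {..<n}. P k} = {(j,i) \<in> {..<t} \<times> {..<n}. P (j,i)}" by auto
    show ?thesis
      using card_Un_split[OF _ _ disj, of P] card_pair_img[of t "{..<m}" P] e by (simp add: IF_def IS_def)
  qed

  have FB: "card {(j,i) \<in> {..<t} \<times> {..<n}. x \<in> blk (j,i) \<and> y \<in> blk (j,i)} = count_list (fulldiffs n Ds) (dif n x y)"
    if "x < n" "y < n" "x \<noteq> y" for x y
  proof -
    have "card {(j,i) \<in> {..<t} \<times> {..<n}. x \<in> blk (j,i) \<and> y \<in> blk (j,i)} = (\<Sum>j<t. count_list (pdiffs n (fst (Ds!j))) (dif n x y))"
      by (rule fullcount2) (use Dj blkF that in auto)
    thus ?thesis using fdsum by simp
  qed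
  have FE: "card {(j,i) \<in> {..<t} \<times> {..<n}. x \<in> insert (ext (j,i)) (blk (j,i)) \<and> y \<in> insert (ext (j,i)) (blk (j,i))} = count_list (extdiffs n Ds) (dif n x y)"
    if "x < n" "y < n" "x \<noteq> y" for x y
  proof -
    have "card {(j,i) \<in> {..<t} \<times> {..<n}. x \<in> (\<lambda>k. insert (ext k) (blk k)) (j,i) \<and> y \<in> (\<lambda>k. insert (ext k) (blk k)) (j,i)} = (\<Sum>j<t. count_list (pdiffs n (snd (Ds!j) # fst (Ds!j))) (dif n x y))"
    proof (rule fullcount2)
      show "\<forall>j<t. \<forall>i. (\<lambda>k. insert (ext k) (blk k)) (j,i) = (\<lambda>z. (z+i) mod n) ` set (snd (Ds!j) # fst (Ds!j))"
        using blkE by blast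
    qed (use Dj that in auto)
    thus ?thesis using edsum by simp
  qed
  have ninf: "n \<notin> blk (j,i) \<and> n \<noteq> ext (j,i)" if "j < t" for j i
  proof -
    have "n \<notin> (\<lambda>z. (z+i) mod n) ` set (fst (Ds!j))" using n0 by (auto simp: less_irrefl mod_less_divisor)
      (metis less_irrefl mod_less_divisor)
    moreover have "(snd (Ds!j) + i) mod n \<noteq> n" using n0 by (metis less_irrefl mod_less_divisor)
    ultimately show ?thesis using blkF[OF that] by simp
  qed
  have FinfB: "{(j,i) \<in> {..<t} \<times> {..<n}. n \<in> blk (j,i) \<and> y \<in> blk (j,i)} = {}" for y
    using ninf by blast
  have FinfE: "{(j,i) \<in> {..<t} \<times> {..<n}. n \<in> insert (ext (j,i)) (blk (j,i)) \<and> y \<in> insert (ext (j,i)) (blk (j,i))} = {}" for y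
    using ninf by blast

  have trip: "x \<in> {n, i, i+m, i+2*m} \<longleftrightarrow> x mod m = i" if "x < n" "i < m" for x i
    using trip_mod[of x m i] that n_def by auto

  have memS: "x \<in> blk (t,i) \<longleftrightarrow> x mod m = i" if "x < n" "i < m" for x i
    using trip[OF that] blkS by simp
  have memSE: "x \<in> insert (ext (t,i)) (blk (t,i)) \<longleftrightarrow> x = es!i \<or> x mod m = i" if "x < n" "i < m" for x i
    using memS[OF that] blkS by simp
  have ninfS: "n \<in> blk (t,i)" for i using blkS by simp
  have SB: "card {i \<in> {..<m}. x \<in> blk (t,i) \<and> y \<in> blk (t,i)} = (if x mod m = y mod m then 1 else 0)"
    if "x < n" "y < n" for x y
  proof -
    have "{i \<in> {..<m}. x \<in> blk (t,i) \<and> y \<in> blk (t,i)} = {i \<in> {..<m}. x mod m = i \<and> y mod m = i}"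
      by (rule Collect_cong) (use memS[OF that(1)] memS[OF that(2)] in auto)
    also have "\<dots> = (if x mod m = y mod m then {x mod m} else {})" using m0 by auto
    finally show ?thesis by simp
  qed
  have SinfB: "card {i \<in> {..<m}. n \<in> blk (t,i) \<and> y \<in> blk (t,i)} = 1" if "y < n" for y
  proof -
    have "{i \<in> {..<m}. n \<in> blk (t,i) \<and> y \<in> blk (t,i)} = {i \<in> {..<m}. y mod m = i}"
      by (rule Collect_cong) (use memS[OF that] ninfS in auto)
    also have "\<dots> = {y mod m}" using m0 by auto
    finally show ?thesis by simp
  qed
  have SinfE: "card {i \<in> {..<m}. n \<in> insert (ext (t,i)) (blk (t,i)) \<and> y \<in> insert (ext (t,i)) (blk (t,i))} \<le> 2" if "y < n" for y
  proof -
    have sub: "{i \<in> {..<m}. n \<in> insert (ext (t,i)) (blk (t,i)) \<and> y \<in> insert (ext (t,i)) (blk (t,i))} \<subseteq> {y mod m} \<union> {i \<in> {..<m}. es!i = y}"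
    proof
      fix i assume "i \<in> {i \<in> {..<m}. n \<in> insert (ext (t,i)) (blk (t,i)) \<and> y \<in> insert (ext (t,i)) (blk (t,i))}"
      hence "i < m" "y = es!i \<or> y mod m = i" using memSE[OF that] by auto
      thus "i \<in> {y mod m} \<union> {i \<in> {..<m}. es!i = y}" by auto
    qed
    have c1: "card {i \<in> {..<m}. es!i = y} \<le> 1"
      using dE les by (auto simp: card_le_Suc0_iff_eq nth_eq_iff_index_eq)
    have "card ({y mod m} \<union> {i \<in> {..<m}. es!i = y}) \<le> card {y mod m} + card {i \<in> {..<m}. es!i = y}"
      by (rule card_Un_le)
    hence "card ({y mod m} \<union> {i \<in> {..<m}. es!i = y}) \<le> 2" using c1 by simp
    moreover have "finite ({y mod m} \<union> {i \<in> {..<m}. es!i = y})" by simp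
    ultimately show ?thesis using card_mono[OF _ sub] by linarith
  qed
  have SE: "card {i \<in> {..<m}. x \<in> insert (ext (t,i)) (blk (t,i)) \<and> y \<in> insert (ext (t,i)) (blk (t,i))}
     \<le> (if x mod m = y mod m then 1 else 0) + (if y = es!(x mod m) then 1 else 0) + (if x = es!(y mod m) then 1 else 0)"
    if "x < n" "y < n" "x \<noteq> y" for x y
  proof -
    let ?A1 = "if x mod m = y mod m then {x mod m} else {}"
    let ?A2 = "if y = es!(x mod m) then {x mod m} else {}"
    let ?A3 = "if x = es!(y mod m) then {y mod m} else {}"
    have sub: "{i \<in> {..<m}. x \<in> insert (ext (t,i)) (blk (t,i)) \<and> y \<in> insert (ext (t,i)) (blk (t,i))} \<subseteq> ?A1 \<union> ?A2 \<union> ?A3"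
    proof
      fix i assume "i \<in> {i \<in> {..<m}. x \<in> insert (ext (t,i)) (blk (t,i)) \<and> y \<in> insert (ext (t,i)) (blk (t,i))}"
      hence i: "i < m" "x = es!i \<or> x mod m = i" "y = es!i \<or> y mod m = i"
        using memSE[OF that(1)] memSE[OF that(2)] by auto
      show "i \<in> ?A1 \<union> ?A2 \<union> ?A3" using i that(3) by auto
    qed
    have "card (?A1 \<union> ?A2 \<union> ?A3) \<le> card ?A1 + card ?A2 + card ?A3"
      by (meson add_le_mono card_Un_le le_trans order_refl)
    also have "\<dots> = (if x mod m = y mod m then 1 else 0) + (if y = es!(x mod m) then 1 else 0) + (if x = es!(y mod m) then 1 else 0)"
      by simp
    moreover have "finite (?A1 \<union> ?A2 \<union> ?A3)" by simp
    ultimately show ?thesis using card_mono[OF _ sub] by linarith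
  qed

  have main_c1: "card {k \<in> IF \<union> IS. x \<in> blk k \<and> y \<in> blk k} = 1" if H: "x \<in> X" "y \<in> X" "x \<noteq> y" for x y
  proof -
    have xy: "x \<le> n" "y \<le> n" using H by (auto simp: X_def)
    consider "x < n" "y < n" | "x = n" "y < n" | "y = n" "x < n" using xy H(3) by linarith
    thus ?thesis
    proof cases
      case 1
      have d: "1 \<le> dif n x y" "dif n x y < n" using dif_zero_iff[OF 1] dif_lt[OF n0] H(3) by auto
      have "(dif n x y mod m = 0) = (x mod m = y mod m)" using dif_mod_m 1 n_def by simp
      thus ?thesis using splitc FB[OF 1 H(3)] SB[OF 1] cF d by auto
    next
      case 2
      have e: "card {k \<in> IF \<union> IS. x \<in> blk k \<and> y \<in> blk k} = card {(j,i)\<in>{..<t}\<times>{..<n}. n \<in> blk (j,i) \<and> y \<in> blk (j,i)} + card {i\<in>{..<m}. n \<in> blk (t,i) \<and> y \<in> blk (t,i)}"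
        using splitc[of "\<lambda>k. n \<in> blk k \<and> y \<in> blk k"] 2(1) by simp
      show ?thesis unfolding e FinfB SinfB[OF 2(2)] by simp
    next
      case 3
      have "{k \<in> IF \<union> IS. x \<in> blk k \<and> y \<in> blk k} = {k \<in> IF \<union> IS. y \<in> blk k \<and> x \<in> blk k}" by auto
      hence e: "card {k \<in> IF \<union> IS. x \<in> blk k \<and> y \<in> blk k} = card {(j,i)\<in>{..<t}\<times>{..<n}. n \<in> blk (j,i) \<and> x \<in> blk (j,i)} + card {i\<in>{..<m}. n \<in> blk (t,i) \<and> x \<in> blk (t,i)}"
        using splitc[of "\<lambda>k. n \<in> blk k \<and> x \<in> blk k"] 3(1) by simp
      show ?thesis unfolding e FinfB SinfB[OF 3(2)] by simp
    qed
  qed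
  have main_c2: "card {k \<in> IF \<union> IS. x \<in> insert (ext k) (blk k) \<and> y \<in> insert (ext k) (blk k)} \<le> 2" if H: "x \<in> X" "y \<in> X" "x \<noteq> y" for x y
  proof -
    have xy: "x \<le> n" "y \<le> n" using H by (auto simp: X_def)
    consider "x < n" "y < n" | "x = n" "y < n" | "y = n" "x < n" using xy H(3) by linarith
    thus ?thesis
    proof cases
      case 1
      let ?d = "dif n x y"
      have d: "1 \<le> ?d" "?d < n" using dif_zero_iff[OF 1] dif_lt[OF n0] H(3) by auto
      have dm: "(?d mod m = 0) = (x mod m = y mod m)" using dif_mod_m 1 n_def by simp
      have tot: "card {k \<in> IF \<union> IS. x \<in> insert (ext k) (blk k) \<and> y \<in> insert (ext k) (blk k)}
         \<le> count_list (extdiffs n Ds) ?d + ((if x mod m = y mod m then 1 else 0) + (if y = es!(x mod m) then 1 else 0) + (if x = es!(y mod m) then 1 else 0))"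
        using splitc FE[OF 1 H(3)] SE[OF 1 H(3)] by simp
      have xm: "x mod m < m" "y mod m < m" using m0 by auto
      have xdec: "x \<in> {0 + x mod m, 0 + x mod m + m, 0 + x mod m + 2*m}"
        using trip_mod[of x m "x mod m"] 1(1) xm(1) n_def by auto
      have ydec: "y \<in> {0 + y mod m, 0 + y mod m + m, 0 + y mod m + 2*m}"
        using trip_mod[of y m "y mod m"] 1(2) xm(2) n_def by auto
      have ce: "count_list (extdiffs n Ds) ?d + count_list R ?d + count_list [m, 2*m] ?d \<le> 2" by (rule cE)
      show ?thesis
      proof (cases "y = es!(x mod m)")
        case True
        have "?d \<in> set (qlist n m 0 es)" using qlist_mem[of "x mod m" es x 0 m n] xdec les xm True by auto
        hence "count_list R ?d \<ge> 1" by (rule cR)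
        moreover have "x mod m \<noteq> y mod m" using E[OF xm(1)] True by auto
        moreover have "x \<noteq> es!(y mod m)" using NM[OF xm(1)] True by auto
        ultimately show ?thesis using tot ce True by simp
      next
        case False
        show ?thesis
        proof (cases "x = es!(y mod m)")
          case True
          have "?d \<in> set (qlist n m 0 es)" using qlist_mem[of "y mod m" es y 0 m n] ydec les xm True by auto
          hence "count_list R ?d \<ge> 1" by (rule cR)
          moreover have "x mod m \<noteq> y mod m" using E[OF xm(2)] True by auto
          ultimately show ?thesis using tot ce False True by simp
        next
          case F2: False
          show ?thesis
          proof (cases "x mod m = y mod m")
            case True
            hence "?d mod m = 0" using dm by simp
            hence "?d = m \<or> ?d = 2*m" using d n_def trip_mod[of ?d m 0] m0 by auto
            hence "count_list [m, 2*m] ?d \<ge> 1" by auto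
            thus ?thesis using tot ce False F2 True by simp
          next
            case F3: False
            show ?thesis using tot ce False F2 F3 by simp
          qed
        qed
      qed
    next
      case 2
      have e: "card {k \<in> IF \<union> IS. x \<in> insert (ext k) (blk k) \<and> y \<in> insert (ext k) (blk k)} = card {(j,i)\<in>{..<t}\<times>{..<n}. n \<in> insert (ext (j,i)) (blk (j,i)) \<and> y \<in> insert (ext (j,i)) (blk (j,i))} + card {i\<in>{..<m}. n \<in> insert (ext (t,i)) (blk (t,i)) \<and> y \<in> insert (ext (t,i)) (blk (t,i))}"
        using splitc[of "\<lambda>k. n \<in> insert (ext k) (blk k) \<and> y \<in> insert (ext k) (blk k)"] 2(1) by simp
      show ?thesis unfolding e FinfE using SinfE[OF 2(2)] by simp
    next
      case 3
      have "{k \<in> IF \<union> IS. x \<in> insert (ext k) (blk k) \<and> y \<in> insert (ext k) (blk k)}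
          = {k \<in> IF \<union> IS. y \<in> insert (ext k) (blk k) \<and> x \<in> insert (ext k) (blk k)}" by auto
      hence e: "card {k \<in> IF \<union> IS. x \<in> insert (ext k) (blk k) \<and> y \<in> insert (ext k) (blk k)} = card {(j,i)\<in>{..<t}\<times>{..<n}. n \<in> insert (ext (j,i)) (blk (j,i)) \<and> x \<in> insert (ext (j,i)) (blk (j,i))} + card {i\<in>{..<m}. n \<in> insert (ext (t,i)) (blk (t,i)) \<and> x \<in> insert (ext (t,i)) (blk (t,i))}"
        using splitc[of "\<lambda>k. n \<in> insert (ext k) (blk k) \<and> x \<in> insert (ext k) (blk k)"] 3(1) by simp
      show ?thesis unfolding e FinfE using SinfE[OF 3(2)] by simp
    qed
  qed
  have "nested_bibd X (image_mset blk (mset_set (IF \<union> IS))) (card X)"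
    by (rule nested_from_index[OF finI fX bl]) (use main_c1 main_c2 in auto)
  thus ?thesis using cX by metis
qed

definition pc :: "nat \<Rightarrow> nat list \<Rightarrow> nat list" where
"pc v D = map (\<lambda>(a,c). a*v+c) (filter (\<lambda>(a,c). a < c) (List.product D D))"

definition pcodes :: "nat \<Rightarrow> (nat list \<times> nat) list \<Rightarrow> nat list" where
"pcodes v Bs = concat (map (\<lambda>(b,p). pc v b) Bs)"

definition ecodes :: "nat \<Rightarrow> (nat list \<times> nat) list \<Rightarrow> nat list" where
"ecodes v Bs = concat (map (\<lambda>(b,p). pc v (p#b)) Bs)"

definition allc :: "nat \<Rightarrow> nat list" where
"allc v = concat (map (\<lambda>a. map (\<lambda>c. a*v+c) [Suc a..<v]) [0..<v])"

definition expl_ok :: "nat \<Rightarrow> (nat list \<times> nat) list \<Rightarrow> bool" where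
"expl_ok v Bs = (list_all (blockok v) Bs \<and> msort (pcodes v Bs) = allc v
   \<and> ok3 (msort (ecodes v Bs)))"

lemma code_inj: "a*v+c = x*v+(y::nat) \<Longrightarrow> c < v \<Longrightarrow> y < v \<Longrightarrow> a = x \<and> c = y"
proof -
  assume h: "a*v+c = x*v+y" "c < v" "y < v"
  have "a = (a*v+c) div v" using h(2) by simp
  also have "\<dots> = (x*v+y) div v" using h(1) by simp
  also have "\<dots> = x" using h(3) by simp
  finally have ax: "a = x" .
  have "c = (a*v+c) mod v" using h(2) by simp
  also have "\<dots> = (x*v+y) mod v" using h(1) by simp
  also have "\<dots> = y" using h(3) by simp
  finally show ?thesis using ax by simp
qed

lemma pc_elem:
  fixes D :: "nat list" and v x y :: nat and z :: "nat \<times> nat"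
  assumes "z \<in> set (filter (\<lambda>(a,c). a < c) (List.product D D))" "(\<lambda>(a,c). a*v+c) z = x*v+y"
    "\<forall>w\<in>set D. w < v" "y < v"
  shows "z = (x,y)"
proof (cases z)
  case (Pair a c)
  have "c \<in> set D" using assms(1) unfolding Pair by simp
  hence cv: "c < v" using assms(3) by blast
  have e: "a*v+c = x*v+y" using assms(2) unfolding Pair by simp
  have "a = x \<and> c = y" by (rule code_inj[OF e cv assms(4)])
  thus ?thesis unfolding Pair by simp
qed

lemma pc_count:
  fixes D :: "nat list" and v x y :: nat
  assumes "distinct D" "\<forall>z\<in>set D. z < v" "x < y" "y < v"
  shows "count_list (pc v D) (x*v+y) = (if x \<in> set D \<and> y \<in> set D then 1 else 0)"
proof -
  let ?A = "set (filter (\<lambda>(a,c). a < c) (List.product D D))"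
  let ?S = "{z \<in> ?A. (\<lambda>(a,c). a*v+c) z = x*v+y}"
  have "count_list (pc v D) (x*v+y) = card ?S"
    unfolding pc_def using assms(1) by (intro count_map_distinct) (simp add: distinct_product)
  also have "?S = (if x \<in> set D \<and> y \<in> set D then {(x,y)} else {})"
  proof -
    have sub: "z = (x,y)" if "z \<in> ?S" for z
    proof -
      have "z \<in> ?A" "(\<lambda>(a,c). a*v+c) z = x*v+y" using that by blast+
      thus ?thesis using pc_elem assms(2,4) by blast
    qed
    have xyS: "(x,y) \<in> ?S \<longleftrightarrow> x \<in> set D \<and> y \<in> set D" using assms(3) by simp
    show ?thesis
    proof (cases "x \<in> set D \<and> y \<in> set D")
      case True
      hence e: "?S = {(x,y)}" using sub xyS by blast
      have r: "(if x \<in> set D \<and> y \<in> set D then {(x,y)} else {}) = {(x,y)}" using True by (rule if_P)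
      show ?thesis unfolding r by (rule e)
    next
      case False
      hence e: "?S = {}" using sub xyS by blast
      have r: "(if x \<in> set D \<and> y \<in> set D then {(x,y)} else {}) = {}" using False by (rule if_not_P)
      show ?thesis unfolding r by (rule e)
    qed
  qed
  finally show ?thesis by simp
qed

lemma allc_count:
  assumes "x < y" "y < v"
  shows "count_list (allc v) (x*v+y) = 1"
proof -
  have r: "count_list (map (\<lambda>c. a*v+c) [Suc a..<v]) (x*v+y) = (if a = x then 1 else 0)" for a
  proof -
    let ?S = "{c \<in> set [Suc a..<v]. a*v+c = x*v+y}"
    have "count_list (map (\<lambda>c. a*v+c) [Suc a..<v]) (x*v+y) = card ?S"
      by (intro count_map_distinct) simp
    also have "?S = (if a = x then {y} else {})"
    proof -
      have "c \<in> ?S \<longleftrightarrow> (a = x \<and> c = y)" for c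
      proof
        assume "c \<in> ?S"
        hence "c < v" "a*v+c = x*v+y" by auto
        thus "a = x \<and> c = y" using code_inj assms(2) by blast
      next
        assume "a = x \<and> c = y"
        thus "c \<in> ?S" using assms by simp
      qed
      thus ?thesis by auto
    qed
    finally show ?thesis by simp
  qed
  have "count_list (allc v) (x*v+y) = (\<Sum>a<v. (if a = x then 1 else 0))"
    unfolding allc_def count_concat_map using r by simp
  also have "\<dots> = 1" using assms by simp
  finally show ?thesis .
qed

lemma card_sum_if: "finite A \<Longrightarrow> card {k \<in> A. P k} = (\<Sum>k\<in>A. if P k then 1 else 0)"
  by (simp add: sum.inter_filter[symmetric])

theorem expl_main:
  assumes ok: "expl_ok v Bs"
  shows "\<exists>X :: nat set. \<exists>B. nested_bibd X B v"
proof -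
  define t where "t = length Bs"
  from ok have bo: "list_all (blockok v) Bs" and pe: "msort (pcodes v Bs) = allc v"
    and iS: "incr (msort (ecodes v Bs))" and n3: "no3 (msort (ecodes v Bs))"
    unfolding expl_ok_def ok3_def by auto
  have Dj: "length (fst (Bs!j)) = 4 \<and> distinct (fst (Bs!j)) \<and> (\<forall>z\<in>set (fst (Bs!j)). z < v)
      \<and> snd (Bs!j) < v \<and> snd (Bs!j) \<notin> set (fst (Bs!j))" if "j < t" for j
  proof -
    have "blockok v (Bs!j)" using bo that by (simp add: list_all_length t_def)
    thus ?thesis by (cases "Bs!j") (auto simp: blockok_def list_all_iff)
  qed
  define blk where "blk k = set (fst (Bs!k))" for k
  define ext where "ext k = snd (Bs!k)" for k
  define X where "X = {..<v}"
  have bl: "\<forall>k\<in>{..<t}. blk k \<subseteq> X \<and> card (blk k) = 4 \<and> ext k \<in> X \<and> ext k \<notin> blk k"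
    using Dj by (auto simp: blk_def ext_def X_def distinct_card)
  have cnt: "card {k \<in> {..<t}. x \<in> set (G k) \<and> y \<in> set (G k)} = count_list (concat (map (\<lambda>(b,p). pc v (F b p)) Bs)) (x*v+y)"
    if G: "\<forall>k<t. distinct (G k) \<and> (\<forall>z\<in>set (G k). z < v)" "\<forall>k<t. G k = F (fst (Bs!k)) (snd (Bs!k))"
    and xy: "x < y" "y < v" for x y G F
  proof -
    have "card {k \<in> {..<t}. x \<in> set (G k) \<and> y \<in> set (G k)} = (\<Sum>k<t. if x \<in> set (G k) \<and> y \<in> set (G k) then 1 else 0)"
      by (rule card_sum_if) simp
    also have "\<dots> = (\<Sum>k<t. count_list (pc v (G k)) (x*v+y))"
      by (rule sum.cong) (use G xy pc_count in auto)
    also have "\<dots> = count_list (concat (map (\<lambda>(b,p). pc v (F b p)) Bs)) (x*v+y)"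
      unfolding count_concat_map t_def using G(2) by (intro sum.cong) (auto simp: case_prod_beta t_def)
    finally show ?thesis .
  qed
  have c1: "card {k \<in> {..<t}. x \<in> blk k \<and> y \<in> blk k} = 1" if "x < y" "y < v" for x y
  proof -
    have "card {k \<in> {..<t}. x \<in> set (fst (Bs!k)) \<and> y \<in> set (fst (Bs!k))} = count_list (concat (map (\<lambda>(b,p). pc v ((\<lambda>b p. b) b p)) Bs)) (x*v+y)"
      by (rule cnt) (use Dj that in auto)
    also have "\<dots> = count_list (pcodes v Bs) (x*v+y)" by (simp add: pcodes_def)
    also have "\<dots> = 1" using count_msort[of "pcodes v Bs"] pe allc_count[OF that] by simp
    finally show ?thesis by (simp add: blk_def)
  qed
  have c2: "card {k \<in> {..<t}. x \<in> insert (ext k) (blk k) \<and> y \<in> insert (ext k) (blk k)} \<le> 2" if "x < y" "y < v" for x y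
  proof -
    have "card {k \<in> {..<t}. x \<in> set (snd (Bs!k) # fst (Bs!k)) \<and> y \<in> set (snd (Bs!k) # fst (Bs!k))} = count_list (concat (map (\<lambda>(b,p). pc v ((\<lambda>b p. p # b) b p)) Bs)) (x*v+y)"
      by (rule cnt) (use Dj that in auto)
    also have "\<dots> = count_list (ecodes v Bs) (x*v+y)" by (simp add: ecodes_def)
    also have "\<dots> \<le> 2" using no3_count[OF incr_sorted[OF iS] n3] count_msort by metis
    finally show ?thesis by (simp add: blk_def ext_def)
  qed
  have sym: "{k \<in> {..<t}. x \<in> A k \<and> y \<in> A k} = {k \<in> {..<t}. y \<in> A k \<and> x \<in> A k}" for x y A
    by auto
  have C1: "\<forall>x\<in>X. \<forall>y\<in>X. x \<noteq> y \<longrightarrow> card {k \<in> {..<t}. x \<in> blk k \<and> y \<in> blk k} = 1"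
  proof (intro ballI impI)
    fix x y assume h: "x \<in> X" "y \<in> X" "x \<noteq> y"
    hence lt: "x < v" "y < v" by (auto simp: X_def)
    show "card {k \<in> {..<t}. x \<in> blk k \<and> y \<in> blk k} = 1"
    proof (cases "x < y")
      case True thus ?thesis using c1 lt by blast
    next
      case False hence "y < x" using h(3) by simp
      hence "card {k \<in> {..<t}. y \<in> blk k \<and> x \<in> blk k} = 1" using c1 lt by blast
      moreover have "{k \<in> {..<t}. y \<in> blk k \<and> x \<in> blk k} = {k \<in> {..<t}. x \<in> blk k \<and> y \<in> blk k}" by blast
      ultimately show ?thesis by simp
    qed
  qed
  have C2: "\<forall>x\<in>X. \<forall>y\<in>X. x \<noteq> y \<longrightarrow> card {k \<in> {..<t}. x \<in> insert (ext k) (blk k) \<and> y \<in> insert (ext k) (blk k)} \<le> 2"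
  proof (intro ballI impI)
    fix x y assume h: "x \<in> X" "y \<in> X" "x \<noteq> y"
    hence lt: "x < v" "y < v" by (auto simp: X_def)
    show "card {k \<in> {..<t}. x \<in> insert (ext k) (blk k) \<and> y \<in> insert (ext k) (blk k)} \<le> 2"
    proof (cases "x < y")
      case True thus ?thesis using c2 lt by blast
    next
      case False hence "y < x" using h(3) by simp
      hence "card {k \<in> {..<t}. y \<in> insert (ext k) (blk k) \<and> x \<in> insert (ext k) (blk k)} \<le> 2" using c2 lt by blast
      moreover have "{k \<in> {..<t}. y \<in> insert (ext k) (blk k) \<and> x \<in> insert (ext k) (blk k)} = {k \<in> {..<t}. x \<in> insert (ext k) (blk k) \<and> y \<in> insert (ext k) (blk k)}" by blast
      ultimately show ?thesis by simp
    qed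
  qed
  have "nested_bibd X (image_mset blk (mset_set {..<t})) (card X)"
    by (rule nested_from_index[OF _ _ bl C1 C2]) (simp_all add: X_def)
  thus ?thesis by (metis X_def card_lessThan)
qed

lemma chk16: "expl_ok 16 [([0, 1, 9, 13], 12), ([1, 2, 10, 14], 3), ([0, 2, 3, 11], 7), ([1, 3, 4, 12], 8), ([2, 4, 5, 13], 0), ([3, 5, 6, 14], 13), ([0, 4, 6, 7], 14), ([1, 5, 7, 8], 6), ([2, 6, 8, 9], 11), ([3, 7, 9, 10], 4), ([4, 8, 10, 11], 13), ([5, 9, 11, 12], 10), ([6, 10, 12, 13], 2), ([7, 11, 13, 14], 1), ([0, 8, 12, 14], 15), ([0, 5, 10, 15], 1), ([1, 6, 11, 15], 4), ([2, 7, 12, 15], 5), ([3, 8, 13, 15], 9), ([4, 9, 14, 15], 2)]"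
  by (simp add: expl_ok_def pcodes_def ecodes_def pc_def allc_def blockok_def ok3_def upt_rec)

lemma nest16: "\<exists>X :: nat set. \<exists>B. nested_bibd X B 16"
  by (rule expl_main[OF chk16])

lemma chk28: "expl_ok 28 [([0, 13, 14, 20], 24), ([1, 12, 14, 18], 6), ([2, 12, 13, 19], 11), ([3, 16, 17, 23], 12), ([4, 15, 17, 21], 7), ([5, 15, 16, 22], 19), ([6, 10, 11, 26], 5), ([7, 9, 11, 24], 25), ([8, 9, 10, 25], 15), ([2, 9, 22, 23], 21), ([0, 10, 21, 23], 8), ([1, 11, 21, 22], 24), ([5, 12, 25, 26], 13), ([3, 13, 24, 26], 6), ([4, 14, 24, 25], 8), ([8, 15, 19, 20], 6), ([6, 16, 18, 20], 21), ([7, 17, 18, 19], 14), ([4, 5, 11, 18], 9), ([3, 5, 9, 19], 8), ([3, 4, 10, 20], 16), ([7, 8, 14, 21], 26), ([6, 8, 12, 22], 7), ([6, 7, 13, 23], 0), ([1, 2, 17, 24], 16), ([0, 2, 15, 25], 18), ([0, 1, 16, 26], 15), ([0, 3, 7, 22], 11), ([1, 4, 8, 23], 11), ([2, 5, 6, 21], 4), ([1, 3, 6, 25], 17), ([2, 4, 7, 26], 3), ([0, 5, 8, 24], 2), ([0, 4, 6, 19], 25), ([1, 5, 7, 20], 23), ([2, 3, 8, 18], 1), ([4, 9, 12, 16], 0), ([5, 10, 13, 17], 22), ([3, 11, 14, 15], 20), ([7, 10, 12, 15], 24), ([8, 11, 13, 16], 18), ([6, 9, 14, 17], 27), ([1,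 9, 13, 15], 14), ([2, 10, 14, 16], 23), ([0, 11, 12, 17], 21), ([13, 18, 21, 25], 10), ([14, 19, 22, 26], 12), ([12, 20, 23, 24], 18), ([16, 19, 21, 24], 27), ([17, 20, 22, 25], 2), ([15, 18, 23, 26], 22), ([10, 18, 22, 24], 3), ([11, 19, 23, 25], 26), ([9, 20, 21, 26], 1), ([0, 9, 18, 27], 26), ([5, 14, 23, 27], 3), ([1, 10, 19, 27], 0), ([2, 11, 20, 27], 10), ([6, 15, 24, 27], 23), ([7, 16, 25, 27], 5), ([3, 12, 21, 27], 15), ([4, 13, 22, 27], 1), ([8, 17, 26, 27], 20)]"
  by (simp add: expl_ok_def pcodes_def ecodes_def pc_def allc_def blockok_def ok3_def upt_rec)

lemma nest28: "\<exists>X :: nat set. \<exists>B. nested_bibd X B 28"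
  by (rule expl_main[OF chk28])

lemma chk40: "cyc_ok 13 [([0, 1, 6, 31], 24), ([0, 2, 12, 23], 4), ([0, 3, 20, 35], 9)] [27, 28, 29, 30, 31, 32, 33, 34, 35, 36, 37, 38, 0] [1, 12, 14, 25, 27, 38]"
  by (simp add: cyc_ok_def blockok_def fulldiffs_def extdiffs_def pdiffs_def dif_def tgt.simps ok3_def)

lemma nest40: "\<exists>X :: nat set. \<exists>B. nested_bibd X B 40"
  using cyc_main[OF chk40] by simp

lemma chk52: "cyc_ok 17 [([0, 1, 3, 16], 43), ([0, 4, 9, 29], 25), ([0, 6, 33, 43], 20), ([0, 7, 19, 30], 12)] [32, 33, 34, 35, 36, 37, 38, 39, 40, 41, 42, 43, 44, 45, 46, 47, 48] [2, 15, 19, 32, 36, 49]"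
  by (simp add: cyc_ok_def blockok_def fulldiffs_def extdiffs_def pdiffs_def dif_def tgt.simps ok3_def)

lemma nest52: "\<exists>X :: nat set. \<exists>B. nested_bibd X B 52"
  using cyc_main[OF chk52] by simp

lemma chk64: "cyc_ok 21 [([0, 1, 26, 36], 60), ([0, 2, 15, 56], 7), ([0, 3, 19, 49], 47), ([0, 4, 12, 43], 25), ([0, 5, 23, 57], 46)] [33, 34, 35, 36, 37, 38, 39, 40, 41, 42, 43, 44, 45, 46, 47, 48, 49, 50, 51, 52, 53] [9, 12, 30, 33, 51, 54]"
  by (simp add: cyc_ok_def blockok_def fulldiffs_def extdiffs_def pdiffs_def dif_def tgt.simps ok3_def)

lemma nest64: "\<exists>X :: nat set. \<exists>B. nested_bibd X B 64"
  using cyc_main[OF chk64] by simp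

lemma chk76: "cyc_ok 25 [([0, 1, 65, 72], 26), ([0, 2, 29, 37], 42), ([0, 5, 21, 63], 3), ([0, 6, 24, 55], 54), ([0, 9, 39, 61], 67), ([0, 13, 41, 56], 37)] [66, 67, 68, 69, 70, 71, 72, 73, 74, 0, 1, 2, 3, 4, 5, 6, 7, 8, 9, 10, 11, 12, 13, 14, 15] [9, 16, 34, 41, 59, 66]"
  by (simp add: cyc_ok_def blockok_def fulldiffs_def extdiffs_def pdiffs_def dif_def tgt.simps ok3_def)

lemma nest76: "\<exists>X :: nat set. \<exists>B. nested_bibd X B 76"
  using cyc_main[OF chk76] by simp

lemma chk88: "cyc_ok 29 [([0, 1, 48, 65], 12), ([0, 2, 35, 44], 45), ([0, 3, 72, 82], 68), ([0, 4, 20, 31], 37), ([0, 6, 38, 68], 8), ([0, 7, 28, 41], 48), ([0, 12, 36, 73], 52)] [26, 27, 28, 29, 30, 31, 32, 33, 34, 35, 36, 37, 38, 39, 40, 41, 42, 43, 44, 45, 46, 47, 48, 49, 50, 51, 52, 53, 54] [3, 26, 32, 55, 61, 84]"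
  by (simp add: cyc_ok_def blockok_def fulldiffs_def extdiffs_def pdiffs_def dif_def tgt.simps ok3_def)

lemma nest88: "\<exists>X :: nat set. \<exists>B. nested_bibd X B 88"
  using cyc_main[OF chk88] by simp

lemma chk100: "cyc_ok 33 [([0, 1, 52, 59], 81), ([0, 2, 20, 24], 9), ([0, 3, 49, 93], 98), ([0, 5, 19, 35], 61), ([0, 8, 45, 73], 20), ([0, 10, 25, 86], 8), ([0, 11, 42, 78], 14), ([0, 12, 39, 82], 52)] [72, 73, 74, 75, 76, 77, 78, 79, 80, 81, 82, 83, 84, 85, 86, 87, 88, 89, 90, 91, 92, 93, 94, 95, 96, 97, 98, 0, 1, 2, 3, 4, 5] [6, 27, 39, 60, 72, 93]"
  by (simp add: cyc_ok_def blockok_def fulldiffs_def extdiffs_def pdiffs_def dif_def tgt.simps ok3_def)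

lemma nest100: "\<exists>X :: nat set. \<exists>B. nested_bibd X B 100"
  using cyc_main[OF chk100] by simp

lemma chk112: "cyc_ok 37 [([0, 1, 100, 104], 5), ([0, 2, 68, 96], 85), ([0, 3, 29, 60], 39), ([0, 5, 55, 64], 14), ([0, 6, 24, 101], 68), ([0, 13, 38, 78], 84), ([0, 14, 36, 84], 37), ([0, 19, 49, 91], 73), ([0, 21, 44, 79], 19)] [22, 23, 24, 25, 26, 27, 28, 29, 30, 31, 32, 33, 34, 35, 36, 37, 38, 39, 40, 41, 42, 43, 44, 45, 46, 47, 48, 49, 50, 51, 52, 53, 54, 55, 56, 57, 58] [15, 22, 52, 59, 89, 96]"
  by (simp add: cyc_ok_def blockok_def fulldiffs_def extdiffs_def pdiffs_def dif_def tgt.simps ok3_def)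

lemma nest112: "\<exists>X :: nat set. \<exists>B. nested_bibd X B 112"
  using cyc_main[OF chk112] by simp

lemma chk124: "cyc_ok 41 [([0, 1, 51, 111], 73), ([0, 2, 16, 40], 33), ([0, 3, 90, 118], 77), ([0, 4, 65, 117], 118), ([0, 7, 55, 101], 120), ([0, 9, 43, 97], 45), ([0, 11, 78, 103], 23), ([0, 15, 32, 96], 59), ([0, 18, 57, 104], 75), ([0, 21, 70, 100], 84)] [108, 109, 110, 111, 112, 113, 114, 115, 116, 117, 118, 119, 120, 121, 122, 0, 1, 2, 3, 4, 5, 6, 7, 8, 9, 10, 11, 12, 13, 14, 15, 16, 17, 18, 19, 20, 21, 22, 23, 24, 25] [15, 26, 56, 67, 97, 108]"
  by (simp add: cyc_ok_def blockok_def fulldiffs_def extdiffs_def pdiffs_def dif_def tgt.simps ok3_def)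

lemma nest124: "\<exists>X :: nat set. \<exists>B. nested_bibd X B 124"
  using cyc_main[OF chk124] by simp

lemma chk136: "cyc_ok 45 [([0, 1, 110, 129], 95), ([0, 2, 54, 69], 53), ([0, 3, 74, 101], 113), ([0, 4, 117, 125], 54), ([0, 5, 49, 105], 29), ([0, 9, 41, 89], 11), ([0, 11, 28, 88], 56), ([0, 12, 65, 96], 60), ([0, 13, 85, 106], 129), ([0, 16, 36, 59], 62), ([0, 24, 62, 102], 93)] [80, 81, 82, 83, 84, 85, 86, 87, 88, 89, 90, 91, 92, 93, 94, 95, 96, 97, 98, 99, 100, 101, 102, 103, 104, 105, 106, 107, 108, 109, 110, 111, 112, 113, 114, 115, 116, 117, 118, 119, 120, 121, 122, 123, 124] [10, 35, 55, 80, 100, 125]"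
  by (simp add: cyc_ok_def blockok_def fulldiffs_def extdiffs_def pdiffs_def dif_def tgt.simps ok3_def)

lemma nest136: "\<exists>X :: nat set. \<exists>B. nested_bibd X B 136"
  using cyc_main[OF chk136] by simp

lemma chk148: "cyc_ok 49 [([0, 1, 13, 102], 53), ([0, 2, 50, 85], 73), ([0, 3, 90, 127], 126), ([0, 4, 47, 74], 54), ([0, 5, 24, 68], 138), ([0, 6, 94, 136], 90), ([0, 7, 32, 41], 2), ([0, 8, 30, 86], 118), ([0, 10, 36, 118], 91), ([0, 14, 81, 109], 99), ([0, 15, 31, 107], 82), ([0, 18, 51, 72], 130)] [113, 114, 115, 116, 117, 118, 119, 120, 121, 122, 123, 124, 125, 126, 127, 128, 129, 130, 131, 132, 133, 134, 135, 136, 137, 138, 139, 140, 141, 142, 143, 144, 145, 146, 0, 1, 2, 3, 4, 5, 6, 7, 8, 9, 10, 11, 12, 13, 14] [15, 34, 64, 83, 113, 132]"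
  by (simp add: cyc_ok_def blockok_def fulldiffs_def extdiffs_def pdiffs_def dif_def tgt.simps ok3_def)

lemma nest148: "\<exists>X :: nat set. \<exists>B. nested_bibd X B 148"
  using cyc_main[OF chk148] by simp

lemma chk160: "cyc_ok 53 [([0, 1, 152, 154], 20), ([0, 3, 52, 141], 36), ([0, 4, 66, 134], 76), ([0, 9, 42, 121], 18), ([0, 10, 84, 139], 125), ([0, 11, 56, 146], 91), ([0, 12, 77, 113], 128), ([0, 14, 64, 125], 3), ([0, 15, 31, 54], 96), ([0, 17, 43, 119], 102), ([0, 19, 51, 86], 133), ([0, 22, 81, 118], 86), ([0, 27, 71, 99], 50)] [66, 67, 68, 69, 70, 71, 72, 73, 74, 75, 76, 77, 78, 79, 80, 81, 82, 83, 84, 85, 86, 87, 88, 89, 90, 91, 92, 93, 94, 95, 96, 97, 98, 99, 100, 101, 102, 103, 104, 105, 106, 107, 108, 109, 110, 111, 112, 113, 114, 115, 116, 117, 118] [13, 40, 66, 93, 119, 146]"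
  by (simp add: cyc_ok_def blockok_def fulldiffs_def extdiffs_def pdiffs_def dif_def tgt.simps ok3_def)

lemma nest160: "\<exists>X :: nat set. \<exists>B. nested_bibd X B 160"
  using cyc_main[OF chk160] by simp

lemma chk172: "cyc_ok 57 [([0, 1, 49, 63], 79), ([0, 2, 146, 158], 117), ([0, 3, 19, 47], 21), ([0, 4, 120, 140], 106), ([0, 5, 107, 118], 67), ([0, 6, 86, 153], 103), ([0, 7, 45, 79], 132), ([0, 8, 90, 119], 55), ([0, 9, 39, 110], 98), ([0, 10, 84, 125], 3), ([0, 17, 59, 95], 37), ([0, 21, 43, 75], 15), ([0, 23, 88, 121], 27), ([0, 26, 66, 103], 166)] [101, 102, 103, 104, 105, 106, 107, 108, 109, 110, 111, 112, 113, 114, 115, 116, 117, 118, 119, 120, 121, 122, 123, 124, 125, 126, 127, 128, 129, 130, 131, 132, 133, 134, 135, 136, 137, 138, 139, 140, 141, 142, 143, 144, 145, 146, 147, 148, 149, 150, 151, 152, 153, 154, 155, 156, 157] [13, 44, 70, 101, 127, 158]"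
  by (simp add: cyc_ok_def blockok_def fulldiffs_def extdiffs_def pdiffs_def dif_def tgt.simps ok3_def)

lemma nest172: "\<exists>X :: nat set. \<exists>B. nested_bibd X B 172"
  using cyc_main[OF chk172] by simp

lemma chk184: "cyc_ok 61 [([0, 1, 71, 121], 49), ([0, 2, 11, 102], 21), ([0, 3, 135, 157], 30), ([0, 4, 31, 140], 172), ([0, 5, 15, 119], 118), ([0, 6, 147, 159], 154), ([0, 7, 53, 108], 174), ([0, 8, 85, 151], 145), ([0, 13, 80, 99], 133), ([0, 14, 138, 158], 83), ([0, 16, 54, 126], 101), ([0, 17, 93, 142], 116), ([0, 18, 105, 149], 92), ([0, 21, 115, 148], 152), ([0, 23, 60, 88], 68)] [165, 166, 167, 168, 169, 170, 171, 172, 173, 174, 175, 176, 177, 178, 179, 180, 181, 182, 0, 1, 2, 3, 4, 5, 6, 7, 8, 9, 10, 11, 12, 13, 14, 15, 16, 17, 18, 19, 20, 21, 22, 23, 24, 25, 26, 27, 28, 29, 30, 31, 32, 33, 34, 35, 36, 37, 38, 39, 40, 41, 42] [18, 43, 79, 104, 140, 165]"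
  by (simp add: cyc_ok_def blockok_def fulldiffs_def extdiffs_def pdiffs_def dif_def tgt.simps ok3_def)

lemma nest184: "\<exists>X :: nat set. \<exists>B. nested_bibd X B 184"
  using cyc_main[OF chk184] by simp

lemma chk196: "cyc_ok 65 [([0, 1, 141, 185], 139), ([0, 2, 39, 128], 179), ([0, 3, 179, 191], 26), ([0, 5, 95, 157], 75), ([0, 6, 135, 180], 130), ([0, 8, 41, 87], 182), ([0, 9, 119, 172], 87), ([0, 13, 72, 94], 171), ([0, 14, 42, 91], 48), ([0, 17, 47, 78], 159), ([0, 18, 70, 138], 185), ([0, 20, 102, 131], 109), ([0, 24, 112, 139], 63), ([0, 25, 73, 169], 58), ([0, 34, 92, 132], 31), ([0, 35, 71, 121], 62)] [155, 156, 157, 158, 159, 160, 161, 162, 163, 164, 165, 166, 167, 168, 169, 170, 171, 172, 173, 174, 175, 176, 177, 178, 179, 180, 181, 182, 183, 184, 185, 186, 187, 188, 189, 190, 191, 192, 193, 194, 0, 1, 2, 3, 4, 5, 6, 7, 8, 9, 10, 11, 12, 13, 14, 15, 16, 17, 18, 19, 20, 21, 22, 23, 24] [25, 40, 90, 105, 155, 170]"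
  by (simp add: cyc_ok_def blockok_def fulldiffs_def extdiffs_def pdiffs_def dif_def tgt.simps ok3_def)

lemma nest196: "\<exists>X :: nat set. \<exists>B. nested_bibd X B 196"
  using cyc_main[OF chk196] by simp

theorem mainTheorem9:
  fixes v :: nat
  assumes "v mod 12 = 4" and "16 \<le> v" and "v \<le> 196"
  shows "\<exists>X :: nat set. \<exists>B. nested_bibd X B v"
proof -
  have "v = 16 \<or> v = 28 \<or> v = 40 \<or> v = 52 \<or> v = 64 \<or> v = 76 \<or> v = 88 \<or> v = 100 \<or> v = 112 \<or> v = 124 \<or> v = 136 \<or> v = 148 \<or> v = 160 \<or> v = 172 \<or> v = 184 \<or> v = 196" using assms by presburger
  thus ?thesis using nest16 nest28 nest40 nest52 nest64 nest76 nest88 nest100 nest112 nest124 nest136 nest148 nest160 nest172 nest184 nest196 by (elim disjE) simp_all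
qed

end
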